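(* Suppose the designer is accuracy aligned ($A_1\ge A_0$ and $B_1\ge B_0$) and $\phi<1$. Then there exist $L\in(0,1)$ and $U\in(0,1)$, depending only on $(A_1,A_0,B_1,B_0,\phi)$, such that for every type distribution $F$ satisfying the assumptions below with $F(0)<L$ or $F(0)>U$, a null equilibrium exists.
   Context: A unit mass of individuals has costs $\gamma_i\in\mathbb{R}$ of compliance ($\beta_i=1$) distributed according to a continuously differentiable CDF $F$ with log-concave density $f$ of full support on $\mathbb{R}$. A classifier $\delta=(\delta_1,\delta_0)\in[0,1]^2$ assigns $d_i$ with $\Pr[d_i=s_i\mid s_i]=\delta_{s_i}$ where $\Pr[s_i=\beta_i]=\phi\in(\tfrac12,1]$; individuals with $d_i=1$ receive reward $r\in\mathbb{R}$. Let $\rho(\delta)=(\delta_1+\delta_0-1)(2\phi-1)$; $\delta$ is null iff $\rho=0$. Individuals comply iff $\gamma_i\le r\rho$; compliance rate $\pi=F(r\rho)$. Designer payoffs $(A_1,A_0,B_1,B_0)\in\mathbb{R}_+^4$ ($A_1$: complier with $d_i=1$; $A_0$: complier with $d_i=0$; $B_1$: non-complier with $d_i=0$; $B_0$: non-complier with $d_i=1$), expected payoff $EU_D(\delta\mid r)=\pi[\phi(A_1\delta_1+A_0(1-\delta_1))+(1-\phi)(A_0\delta_0+A_1(1-\delta_0))]+(1-\pi)[\phi(B_1\delta_0+B_0(1-\delta_0))+(1-\phi)(B_0\delta_1+B_1(1-\delta_1))]$. Rewards are budget balanced and each individual also gets $t\pi$, $t\ge0$; individual $i$'s payoff from $r$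 given $\delta$ is $U_i(r)=-\gamma_i+r\rho(1-F(r\rho))+tF(r\rho)$ if $\gamma_i\le r\rho$, else $-r\rho F(r\rho)+tF(r\rho)$. The median individual has cost $\gamma_\mu$ with $F(\gamma_\mu)=\tfrac12$. An equilibrium is a pair $(r^*,\delta^* )$ such that $r^*$ maximizes $U_\mu(r)$ given $\delta^*$ and $\delta^*$ maximizes $EU_D(\delta\mid r^* )$ over $[0,1]^2$; a null equilibrium is one with $r^*=0$ and/or $\delta^*$ null. *)

theory Defs
  imports "HOL-Analysis.Analysis"
begin

definition rho :: "real \<Rightarrow> real \<Rightarrow> real \<Rightarrow> real" where
  "rho phi d1 d0 = (d1 + d0 - 1) * (2 * phi - 1)"

text \<open>Designer's expected payoff EU_D(delta | r), with compliance rate pi = F(r rho).\<close>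
definition EUD :: "(real \<Rightarrow> real) \<Rightarrow> real \<Rightarrow> real \<Rightarrow> real \<Rightarrow> real \<Rightarrow> real
    \<Rightarrow> real \<Rightarrow> real \<Rightarrow> real \<Rightarrow> real" where
  "EUD F A1 A0 B1 B0 phi r d1 d0 =
     (let p = F (r * rho phi d1 d0) in
        p * (phi * (A1 * d1 + A0 * (1 - d1)) + (1 - phi) * (A0 * d0 + A1 * (1 - d0)))
      + (1 - p) * (phi * (B1 * d0 + B0 * (1 - d0)) + (1 - phi) * (B0 * d1 + B1 * (1 - d1))))"

definition Uind :: "(real \<Rightarrow> real) \<Rightarrow> real \<Rightarrow> real \<Rightarrow> real \<Rightarrow> real \<Rightarrow> real \<Rightarrow> real \<Rightarrow> real" where
  "Uind F t phi g d1 d0 r =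
     (let x = r * rho phi d1 d0 in
        if g \<le> x then - g + x * (1 - F x) + t * F x
        else - x * F x + t * F x)"

text \<open>Equilibrium: r maximizes the median individual's payoff given delta (over all real r),
  and delta maximizes the designer's payoff given r over [0,1]^2.\<close>
definition is_equilibrium :: "(real \<Rightarrow> real) \<Rightarrow> real \<Rightarrow> real \<Rightarrow> real \<Rightarrow> real \<Rightarrow> real \<Rightarrow> real
    \<Rightarrow> real \<Rightarrow> real \<Rightarrow> real \<Rightarrow> real \<Rightarrow> bool" where
  "is_equilibrium F t gmu A1 A0 B1 B0 phi r d1 d0 \<longleftrightarrow>
     d1 \<in> {0..1} \<and> d0 \<in> {0..1} \<and>
     (\<forall>r'. Uind F t phi gmu d1 d0 r' \<le> Uind F t phi gmu d1 d0 r) \<and>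
     (\<forall>e1\<in>{0..1}. \<forall>e0\<in>{0..1}. EUD F A1 A0 B1 B0 phi r e1 e0 \<le> EUD F A1 A0 B1 B0 phi r d1 d0)"

definition null_equilibrium :: "(real \<Rightarrow> real) \<Rightarrow> real \<Rightarrow> real \<Rightarrow> real \<Rightarrow> real \<Rightarrow> real \<Rightarrow> real
    \<Rightarrow> real \<Rightarrow> real \<Rightarrow> real \<Rightarrow> real \<Rightarrow> bool" where
  "null_equilibrium F t gmu A1 A0 B1 B0 phi r d1 d0 \<longleftrightarrow>
     is_equilibrium F t gmu A1 A0 B1 B0 phi r d1 d0 \<and> (r = 0 \<or> rho phi d1 d0 = 0)"

definition admissible_cdf :: "(real \<Rightarrow> real) \<Rightarrow> (real \<Rightarrow> real) \<Rightarrow> bool" where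
  "admissible_cdf F f \<longleftrightarrow>
     mono F \<and> (F \<longlongrightarrow> 0) at_bot \<and> (F \<longlongrightarrow> 1) at_top \<and>
     (\<forall>x. (F has_real_derivative f x) (at x)) \<and> continuous_on UNIV f \<and>
     (\<forall>x. 0 < f x) \<and> concave_on UNIV (\<lambda>x. ln (f x))"

end

theory Submission
  imports Defs
begin

lemma EUD0:
  "EUD F A1 A0 B1 B0 phi 0 e1 e0 =
     F 0 * (phi * A0 + (1 - phi) * A1) + (1 - F 0) * (phi * B0 + (1 - phi) * B1)
     + (F 0 * phi * (A1 - A0) - (1 - F 0) * (1 - phi) * (B1 - B0)) * e1
     + ((1 - F 0) * phi * (B1 - B0) - F 0 * (1 - phi) * (A1 - A0)) * e0"
  unfolding EUD_def Let_def by (simp add: algebra_simps)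

lemma Uind_null: "rho phi d1 d0 = 0 \<Longrightarrow> Uind F t phi g d1 d0 r = Uind F t phi g d1 d0 r'"
  unfolding Uind_def Let_def by simp

lemma F0_bounds:
  assumes "admissible_cdf F f" shows "0 \<le> F 0" "F 0 \<le> 1"
proof -
  have m: "mono F" and l0: "(F \<longlongrightarrow> 0) at_bot" and l1: "(F \<longlongrightarrow> 1) at_top"
    using assms unfolding admissible_cdf_def by auto
  have "eventually (\<lambda>x. F x \<le> F 0) at_bot"
    using m by (auto simp: eventually_at_bot_linorder mono_def intro!: exI[of _ 0])
  then show "0 \<le> F 0" using tendsto_upperbound[OF l0] by auto
  have "eventually (\<lambda>x. F 0 \<le> F x) at_top"
    using m by (auto simp: eventually_at_top_linorder mono_def intro!: exI[of _ 0])
  then show "F 0 \<le> 1" using tendsto_lowerbound[OF l1] by auto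
qed

lemma key:
  fixes A1 A0 B1 B0 phi q :: real
  assumes "A1 \<ge> A0" "B1 \<ge> B0" "1/2 < phi" "phi < 1" "0 \<le> F 0" "F 0 \<le> 1"
    and nb: "\<not> (F 0 * phi * (A1 - A0) - (1 - F 0) * (1 - phi) * (B1 - B0) > 0 \<and>
               (1 - F 0) * phi * (B1 - B0) - F 0 * (1 - phi) * (A1 - A0) > 0)"
  shows "\<exists>r d1 d0. null_equilibrium F t gmu A1 A0 B1 B0 phi r d1 d0"
proof -
  define c1 where "c1 = F 0 * phi * (A1 - A0) - (1 - F 0) * (1 - phi) * (B1 - B0)"
  define c0 where "c0 = (1 - F 0) * phi * (B1 - B0) - F 0 * (1 - phi) * (A1 - A0)"
  define K where "K = F 0 * (phi * A0 + (1 - phi) * A1) + (1 - F 0) * (phi * B0 + (1 - phi) * B1)"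
  have E: "\<And>e1 e0. EUD F A1 A0 B1 B0 phi 0 e1 e0 = K + c1 * e1 + c0 * e0"
    unfolding EUD0 c1_def c0_def K_def by simp
  have sum: "c1 + c0 \<ge> 0"
  proof -
    have "c1 + c0 = (2*phi - 1) * (F 0 * (A1 - A0) + (1 - F 0) * (B1 - B0))"
      unfolding c1_def c0_def by (simp add: algebra_simps)
    moreover have "F 0 * (A1 - A0) + (1 - F 0) * (B1 - B0) \<ge> 0"
      using assms by (intro add_nonneg_nonneg mult_nonneg_nonneg) auto
    ultimately show ?thesis using assms by simp
  qed
  have U: "\<And>d1 d0 r'. d1 + d0 = 1 \<Longrightarrow> Uind F t phi gmu d1 d0 r' \<le> Uind F t phi gmu d1 d0 0"
    by (metis Uind_null add_diff_cancel_left' cancel_comm_monoid_add_class.diff_cancel mult_zero_left order_refl rho_def)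
  have nb': "\<not> (c1 > 0 \<and> c0 > 0)" using nb unfolding c1_def c0_def .
  show ?thesis
  proof (cases "c1 > 0")
    case True
    then have "c0 \<le> 0" using nb' sum by linarith
    have "null_equilibrium F t gmu A1 A0 B1 B0 phi 0 1 0"
      unfolding null_equilibrium_def is_equilibrium_def
    proof (intro conjI ballI allI)
      fix e1 e0 :: real assume "e1 \<in> {0..1}" "e0 \<in> {0..1}"
      then have "c1 * e1 \<le> c1" "c0 * e0 \<le> 0"
        using True \<open>c0 \<le> 0\<close> by (auto simp: mult_left_le mult_nonpos_nonneg)
      then show "EUD F A1 A0 B1 B0 phi 0 e1 e0 \<le> EUD F A1 A0 B1 B0 phi 0 1 0"
        unfolding E by simp
    qed (use U in auto)
    then show ?thesis by blast
  next
    case False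
    then have "c0 \<ge> 0" using sum by linarith
    have "null_equilibrium F t gmu A1 A0 B1 B0 phi 0 0 1"
      unfolding null_equilibrium_def is_equilibrium_def
    proof (intro conjI ballI allI)
      fix e1 e0 :: real assume "e1 \<in> {0..1}" "e0 \<in> {0..1}"
      then have "c0 * e0 \<le> c0" "c1 * e1 \<le> 0"
        using False \<open>c0 \<ge> 0\<close> by (auto simp: mult_left_le mult_nonpos_nonneg)
      then show "EUD F A1 A0 B1 B0 phi 0 e1 e0 \<le> EUD F A1 A0 B1 B0 phi 0 0 1"
        unfolding E by simp
    qed (use U in auto)
    then show ?thesis by blast
  qed
qed

theorem corollary4:
  fixes A1 A0 B1 B0 phi :: real
  assumes "0 \<le> A1" "0 \<le> A0" "0 \<le> B1" "0 \<le> B0"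
    and "A1 \<ge> A0" "B1 \<ge> B0"
    and "1/2 < phi" "phi < 1"
  shows "\<exists>L U. 0 < L \<and> L < 1 \<and> 0 < U \<and> U < 1 \<and>
           (\<forall>F f t gmu. admissible_cdf F f \<and> 0 \<le> t \<and> F gmu = 1/2 \<and>
              (F 0 < L \<or> F 0 > U) \<longrightarrow>
              (\<exists>r d1 d0. null_equilibrium F t gmu A1 A0 B1 B0 phi r d1 d0))"
proof -
  define a where "a = A1 - A0"
  define b where "b = B1 - B0"
  have a0: "a \<ge> 0" and b0: "b \<ge> 0" using assms by (auto simp: a_def b_def)
  show ?thesis
  proof (cases "a > 0 \<and> b > 0")
    case True
    define L where "L = (1 - phi) * b / (phi * a + (1 - phi) * b)"
    define U where "U = phi * b / ((1 - phi) * a + phi * b)"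
    have p1: "phi * a + (1 - phi) * b > 0" "(1 - phi) * a + phi * b > 0"
      using True assms by (auto intro: add_pos_pos)
    have "0 < L" "L < 1" "0 < U" "U < 1"
      using True assms p1 by (auto simp: L_def U_def field_simps)
    moreover have "\<forall>F f t gmu. admissible_cdf F f \<and> 0 \<le> t \<and> F gmu = 1/2 \<and>
              (F 0 < L \<or> F 0 > U) \<longrightarrow>
              (\<exists>r d1 d0. null_equilibrium F t gmu A1 A0 B1 B0 phi r d1 d0)"
    proof (intro allI impI)
      fix F f and t :: real and gmu assume h: "admissible_cdf F f \<and> 0 \<le> t \<and> F gmu = 1/2 \<and> (F 0 < L \<or> F 0 > U)"
      have q: "0 \<le> F 0" "F 0 \<le> 1" using F0_bounds h by auto
      have "\<not> (F 0 * phi * a - (1 - F 0) * (1 - phi) * b > 0 \<and>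
               (1 - F 0) * phi * b - F 0 * (1 - phi) * a > 0)"
      proof (cases "F 0 < L")
        case True
        then have "F 0 * (phi * a + (1 - phi) * b) < (1 - phi) * b"
          using p1 by (simp add: L_def pos_less_divide_eq)
        then show ?thesis by (simp add: algebra_simps)
      next
        case False
        then have "F 0 > U" using h by auto
        then have "F 0 * ((1 - phi) * a + phi * b) > phi * b"
          using p1 by (simp add: U_def pos_divide_less_eq)
        then show ?thesis by (simp add: algebra_simps)
      qed
      then show "\<exists>r d1 d0. null_equilibrium F t gmu A1 A0 B1 B0 phi r d1 d0"
        using key[of A0 A1 B0 B1 phi F] assms q unfolding a_def b_def by auto
    qed
    ultimately show ?thesis by blast
  next
    case False
    then have ab: "a = 0 \<or> b = 0" using a0 b0 by auto
    have "\<forall>F f t gmu. admissible_cdf F f \<and> 0 \<le> t \<and> F gmu = 1/2 \<and>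
              (F 0 < 1/2 \<or> F 0 > 1/2) \<longrightarrow>
              (\<exists>r d1 d0. null_equilibrium F t gmu A1 A0 B1 B0 phi r d1 d0)"
    proof (intro allI impI)
      fix F f and t :: real and gmu assume h: "admissible_cdf F f \<and> 0 \<le> t \<and> F gmu = 1/2 \<and> (F 0 < 1/2 \<or> F 0 > 1/2)"
      have q: "0 \<le> F 0" "F 0 \<le> 1" using F0_bounds h by auto
      have "\<not> (F 0 * phi * a - (1 - F 0) * (1 - phi) * b > 0 \<and>
               (1 - F 0) * phi * b - F 0 * (1 - phi) * a > 0)"
      proof (cases "a = 0")
        case True
        have "(1 - F 0) * (1 - phi) * b \<ge> 0" using q assms b0 by simp
        then show ?thesis using True by simp
      next
        case False
        then have "b = 0" using ab by simp
        have "F 0 * (1 - phi) * a \<ge> 0" using q assms a0 by simp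
        then show ?thesis using \<open>b = 0\<close> by simp
      qed
      then show "\<exists>r d1 d0. null_equilibrium F t gmu A1 A0 B1 B0 phi r d1 d0"
        using key[of A0 A1 B0 B1 phi F] assms q unfolding a_def b_def by auto
    qed
    then show ?thesis by (intro exI[of _ "1/2"]) auto
  qed
qed

end
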